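(* Let $t$ be a planar binary tree with $n\ge1$ internal vertices, with leaves $l_1,\dots,l_{n+1}$ numbered from left to right, and let $\varphi$ be a level function on $t$. Let $\sigma=\sigma_{t,\varphi}\in S_n$ be the associated permutation. Then the map $j\mapsto l_{j+1}$ restricts to a bijection from the descent set $D(\sigma)=\{i\in\{1,\dots,n-1\}:\sigma(i)>\sigma(i+1)\}$ onto the set of descents of $t$.
   Context: A planar binary tree is a finite planar rooted tree in which every internal vertex has exactly two incoming edges (left and right) and one outgoing edge; leaves are the external incoming edges. Internal vertices are partially ordered by $u<v$ iff $u$ lies on the path from the root to $v$. A level function is a bijection $\varphi$ from the set of internal vertices onto $\{1,\dots,n\}$ which is decreasing for this order (if $u<v$ then $\varphi(u)>\varphi(v)$; so the root has level $n$). For $i=1,\dots,n$, let $u_i$ be the internal vertex lying between $l_i$ and $l_{i+1}$, i.e. the unique internal vertex such that $l_i$ lies in its left subtree and $l_{i+1}$ in its right subtree; then $\sigma_{t,\varphi}(i):=\varphi(u_i)$. A leaf of $t$ is a descent if it is not the leftmost leaf and it is the left incoming edge of its internal vertex. *)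

theory Defs
  imports Main "HOL-Library.Sublist"
begin

datatype pbt = Leaf | Node pbt pbt

text \<open>Positions in a tree are addressed by paths from the root;
False = go to the left incoming edge, True = go to the right one.\<close>

fun internal_vertices :: "pbt \<Rightarrow> bool list set" where
  "internal_vertices Leaf = {}"
| "internal_vertices (Node l r) =
     {[]} \<union> Cons False ` internal_vertices l \<union> Cons True ` internal_vertices r"

fun leaves :: "pbt \<Rightarrow> bool list list" where
  "leaves Leaf = [[]]"
| "leaves (Node l r) = map (Cons False) (leaves l) @ map (Cons True) (leaves r)"

text \<open>Leaf l_i (1-based numbering from left to right).\<close>
definition leaf :: "pbt \<Rightarrow> nat \<Rightarrow> bool list" where
  "leaf t i = leaves t ! (i - 1)"

text \<open>u < v iff u lies on the path from the root to v (u a proper ancestor of v).\<close>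
definition vertex_less :: "bool list \<Rightarrow> bool list \<Rightarrow> bool" where
  "vertex_less u v \<longleftrightarrow> strict_prefix u v"

definition level_function :: "pbt \<Rightarrow> (bool list \<Rightarrow> nat) \<Rightarrow> bool" where
  "level_function t \<phi> \<longleftrightarrow>
     bij_betw \<phi> (internal_vertices t) {1..card (internal_vertices t)} \<and>
     (\<forall>u\<in>internal_vertices t. \<forall>v\<in>internal_vertices t. vertex_less u v \<longrightarrow> \<phi> u > \<phi> v)"

definition in_left_subtree :: "bool list \<Rightarrow> bool list \<Rightarrow> bool" where
  "in_left_subtree x u \<longleftrightarrow> prefix (u @ [False]) x"
definition in_right_subtree :: "bool list \<Rightarrow> bool list \<Rightarrow> bool" where
  "in_right_subtree x u \<longleftrightarrow> prefix (u @ [True]) x"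

definition between_vertex :: "pbt \<Rightarrow> nat \<Rightarrow> bool list" where
  "between_vertex t i = (THE u. u \<in> internal_vertices t \<and>
      in_left_subtree (leaf t i) u \<and> in_right_subtree (leaf t (Suc i)) u)"

definition sigma :: "pbt \<Rightarrow> (bool list \<Rightarrow> nat) \<Rightarrow> nat \<Rightarrow> nat" where
  "sigma t \<phi> i = \<phi> (between_vertex t i)"

definition perm_descents :: "(nat \<Rightarrow> nat) \<Rightarrow> nat \<Rightarrow> nat set" where
  "perm_descents \<sigma> n = {i \<in> {1..n-1}. \<sigma> i > \<sigma> (Suc i)}"

text \<open>Descents of a tree: leaves that are not the leftmost leaf and are the left
incoming edge of their internal vertex (i.e. the last step of the path is left).\<close>
definition tree_descents :: "pbt \<Rightarrow> bool list set" where
  "tree_descents t = {l \<in> set (leaves t). l \<noteq> leaf t 1 \<and> l \<noteq> [] \<and> last l = False}"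

end

theory Submission
  imports Defs
begin

lemma fin_iv: "finite (internal_vertices t)"
  by (induction t) auto

lemma len_leaves: "length (leaves t) = Suc (card (internal_vertices t))"
proof (induction t)
  case Leaf
  then show ?case by simp
next
  case (Node l r)
  let ?A = "Cons False ` internal_vertices l" and ?B = "Cons True ` internal_vertices r"
  have cA: "card ?A = card (internal_vertices l)" by (simp add: card_image)
  have cB: "card ?B = card (internal_vertices r)" by (simp add: card_image)
  have d1: "[] \<notin> ?A \<union> ?B" by auto
  have d2: "?A \<inter> ?B = {}" by auto
  have "card ({[]} \<union> ?A \<union> ?B) = card ({[]} \<union> (?A \<union> ?B))" by (simp add: Un_assoc)
  also have "\<dots> = 1 + card (?A \<union> ?B)"
    using d1 fin_iv by (subst card_Un_disjoint) auto
  also have "\<dots> = 1 + card ?A + card ?B"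
    using d2 fin_iv by (subst card_Un_disjoint) auto
  finally show ?case using Node cA cB by simp
qed

lemma distinct_leaves: "distinct (leaves t)"
  by (induction t) (auto simp: distinct_map)

lemma leaves_ne: "leaves t \<noteq> []"
  by (induction t) auto

lemma hd_leaves: "\<exists>p. hd (leaves t) = replicate p False"
proof (induction t)
  case Leaf
  then show ?case by (rule exI[of _ 0]) simp
next
  case (Node l r)
  then obtain p where "hd (leaves l) = replicate p False" by blast
  then show ?case using leaves_ne[of l] by (intro exI[of _ "Suc p"]) (cases "leaves l", auto)
qed

lemma last_leaves: "\<exists>p. last (leaves t) = replicate p True"
proof (induction t)
  case Leaf
  then show ?case by (rule exI[of _ 0]) simp
next
  case (Node l r)
  then obtain p where "last (leaves r) = replicate p True" by blast
  then show ?case using leaves_ne[of r] by (intro exI[of _ "Suc p"]) (simp add: last_map)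
qed

lemma consec:
  "Suc k < length (leaves t) \<Longrightarrow> \<exists>u p q. u \<in> internal_vertices t \<and>
     leaves t ! k = u @ False # replicate p True \<and> leaves t ! Suc k = u @ True # replicate q False"
proof (induction t arbitrary: k)
  case Leaf
  then show ?case by simp
next
  case (Node l r)
  let ?L1 = "leaves l" and ?L2 = "leaves r"
  have lt: "Suc k < length ?L1 + length ?L2" using Node.prems by simp
  consider "Suc k < length ?L1" | "Suc k = length ?L1" | "Suc k > length ?L1" by linarith
  then show ?case
  proof cases
    case 1
    from Node.IH(1)[OF 1] obtain u p q where
      h: "u \<in> internal_vertices l" "?L1 ! k = u @ False # replicate p True"
         "?L1 ! Suc k = u @ True # replicate q False" by blast
    show ?thesis
      using 1 h by - (rule exI[of _ "False # u"], rule exI[of _ p], rule exI[of _ q], simp add: nth_append)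
  next
    case 2
    obtain p where p: "last ?L1 = replicate p True" using last_leaves by blast
    obtain q where q: "hd ?L2 = replicate q False" using hd_leaves by blast
    have a: "leaves (Node l r) ! k = False # last ?L1"
      proof -
      have kk: "k = length ?L1 - 1" using 2 by simp
      show ?thesis using 2 leaves_ne[of l] unfolding kk by (simp add: nth_append last_conv_nth)
    qed
    have b: "leaves (Node l r) ! Suc k = True # hd ?L2"
      using 2 leaves_ne[of r] by (simp add: nth_append hd_conv_nth)
    show ?thesis using a b p q by - (rule exI[of _ "[]"], rule exI[of _ p], rule exI[of _ q], simp)
  next
    case 3
    define k' where "k' = k - length ?L1"
    have k: "k = length ?L1 + k'" using 3 k'_def by simp
    have s: "Suc k' < length ?L2" using lt k by simp
    from Node.IH(2)[OF s] obtain u p q where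
      h: "u \<in> internal_vertices r" "?L2 ! k' = u @ False # replicate p True"
         "?L2 ! Suc k' = u @ True # replicate q False" by blast
    have e: "Suc k = length ?L1 + Suc k'" using k by simp
    show ?thesis
      using h s unfolding e k by - (rule exI[of _ "True # u"], rule exI[of _ p], rule exI[of _ q], simp add: nth_append)
  qed
qed

lemma prefix_split_unique:
  "prefix (v @ [a]) (u @ b # xs) \<Longrightarrow> prefix (v @ [c]) (u @ d # ys) \<Longrightarrow> a \<noteq> c \<Longrightarrow> b \<noteq> d \<Longrightarrow> v = u"
proof (induction u arbitrary: v)
  case Nil
  then show ?case by (cases v) auto
next
  case (Cons x u)
  then show ?case by (cases v) auto
qed

lemma between:
  assumes "Suc k < length (leaves t)" "leaves t ! k = u @ False # replicate p True"
    "leaves t ! Suc k = u @ True # replicate q False" "u \<in> internal_vertices t"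
  shows "between_vertex t (Suc k) = u"
  unfolding between_vertex_def leaf_def in_left_subtree_def in_right_subtree_def
proof (rule the_equality)
  show "u \<in> internal_vertices t \<and> prefix (u @ [False]) (leaves t ! (Suc k - 1)) \<and>
        prefix (u @ [True]) (leaves t ! (Suc (Suc k) - 1))"
    using assms by simp
next
  fix v assume "v \<in> internal_vertices t \<and> prefix (v @ [False]) (leaves t ! (Suc k - 1)) \<and>
        prefix (v @ [True]) (leaves t ! (Suc (Suc k) - 1))"
  then show "v = u" using assms prefix_split_unique[of v False u False _ True True] by auto
qed

lemma rep_snoc: "p > 0 \<Longrightarrow> replicate p x = replicate (p - 1) x @ [x]"
  by (cases p) (auto simp: replicate_append_same)

theorem lemma5p2:
  fixes t :: pbt and \<phi> :: "bool list \<Rightarrow> nat" and n :: nat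
  assumes "n = card (internal_vertices t)"
    and "n \<ge> 1"
    and "level_function t \<phi>"
  shows "bij_betw (\<lambda>j. leaf t (j + 1)) (perm_descents (sigma t \<phi>) n) (tree_descents t)"
proof -
  let ?L = "leaves t"
  have len: "length ?L = Suc n" using assms(1) len_leaves by simp
  have dist: "distinct ?L" by (rule distinct_leaves)
  have mono: "\<And>u v. u \<in> internal_vertices t \<Longrightarrow> v \<in> internal_vertices t \<Longrightarrow> strict_prefix u v \<Longrightarrow> \<phi> u > \<phi> v"
    using assms(3) unfolding level_function_def vertex_less_def by blast
  have lf: "\<And>j. leaf t (j + 1) = ?L ! j" by (simp add: leaf_def)
  have key: "\<And>i. 1 \<le> i \<Longrightarrow> Suc i \<le> n \<Longrightarrow>
      (sigma t \<phi> i > sigma t \<phi> (Suc i) \<longleftrightarrow> last (?L ! i) = False) \<and> ?L ! i \<noteq> []"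
  proof -
    fix i assume i: "1 \<le> i" "Suc i \<le> n"
    have s1: "Suc (i - 1) < length ?L" using i len by simp
    have s2: "Suc i < length ?L" using i len by simp
    obtain u p q where h1: "u \<in> internal_vertices t" "?L ! (i - 1) = u @ False # replicate p True"
       "?L ! Suc (i - 1) = u @ True # replicate q False" using consec[OF s1] by blast
    obtain u' p' q' where h2: "u' \<in> internal_vertices t" "?L ! i = u' @ False # replicate p' True"
       "?L ! Suc i = u' @ True # replicate q' False" using consec[OF s2] by blast
    have si: "Suc (i - 1) = i" using i by simp
    have b1: "between_vertex t i = u" using between[OF s1 h1(2,3,1)] si by simp
    have b2: "between_vertex t (Suc i) = u'" using between[OF s2 h2(2,3,1)] by simp
    have eq: "u @ True # replicate q False = u' @ False # replicate p' True" using h1(3) h2(2) si by simp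
    have ne: "?L ! i \<noteq> []" using h2(2) by simp
    show "(sigma t \<phi> i > sigma t \<phi> (Suc i) \<longleftrightarrow> last (?L ! i) = False) \<and> ?L ! i \<noteq> []"
    proof (cases "q = 0")
      case True
      have pp: "p' > 0"
      proof (rule ccontr)
        assume "\<not> p' > 0" then have "p' = 0" by simp
        then show False using eq True by simp
      qed
      have "(u @ [True]) = (u' @ False # replicate (p' - 1) True) @ [True]"
        using eq True rep_snoc[OF pp, of True] by simp
      then have uu: "u = u' @ False # replicate (p' - 1) True" by simp
      have "strict_prefix u' u" unfolding uu by (simp add: strict_prefix_def)
      then have "\<phi> u' > \<phi> u" using mono h1(1) h2(1) by blast
      moreover have "last (?L ! i) = True" using h1(3) si True by simp
      ultimately show ?thesis using ne b1 b2 by (simp add: sigma_def)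
    next
      case False
      have pp: "p' = 0"
      proof (rule ccontr)
        assume "p' \<noteq> 0"
        then have "last (u' @ False # replicate p' True) = True" by simp
        moreover have "last (u @ True # replicate q False) = False" using False by simp
        ultimately show False using eq by simp
      qed
      have "(u @ True # replicate (q - 1) False) @ [False] = u' @ [False]"
        using eq pp rep_snoc[of q False] False by simp
      then have uu: "u' = u @ True # replicate (q - 1) False" by simp
      have "strict_prefix u u'" unfolding uu by (simp add: strict_prefix_def)
      then have "\<phi> u > \<phi> u'" using mono h1(1) h2(1) by blast
      moreover have "last (?L ! i) = False" using h1(3) si False by simp
      ultimately show ?thesis using ne b1 b2 by (simp add: sigma_def)
    qed
  qed
  show ?thesis
    unfolding bij_betw_def
  proof
    show "inj_on (\<lambda>j. leaf t (j + 1)) (perm_descents (sigma t \<phi>) n)"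
      unfolding lf
    proof (rule inj_onI)
      fix x y assume "x \<in> perm_descents (sigma t \<phi>) n" "y \<in> perm_descents (sigma t \<phi>) n" "?L ! x = ?L ! y"
      then have "x < length ?L" "y < length ?L" using len unfolding perm_descents_def by auto
      then show "x = y" using dist \<open>?L ! x = ?L ! y\<close> by (simp add: nth_eq_iff_index_eq)
    qed
  next
    show "(\<lambda>j. leaf t (j + 1)) ` perm_descents (sigma t \<phi>) n = tree_descents t"
    proof
      show "(\<lambda>j. leaf t (j + 1)) ` perm_descents (sigma t \<phi>) n \<subseteq> tree_descents t"
      proof
        fix l assume "l \<in> (\<lambda>j. leaf t (j + 1)) ` perm_descents (sigma t \<phi>) n"
        then obtain j where j: "j \<in> perm_descents (sigma t \<phi>) n" and l: "l = ?L ! j" using lf by auto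
        have j1: "1 \<le> j" "Suc j \<le> n" "sigma t \<phi> j > sigma t \<phi> (Suc j)"
          using j assms(2) unfolding perm_descents_def by auto
        have "j < length ?L" using j1 len by simp
        moreover have "?L ! j \<noteq> ?L ! 0" using dist j1 len by (simp add: nth_eq_iff_index_eq)
        ultimately show "l \<in> tree_descents t" using key[OF j1(1,2)] j1(3) l
          unfolding tree_descents_def leaf_def by auto
      qed
    next
      show "tree_descents t \<subseteq> (\<lambda>j. leaf t (j + 1)) ` perm_descents (sigma t \<phi>) n"
      proof
        fix l assume "l \<in> tree_descents t"
        then have l: "l \<in> set ?L" "l \<noteq> ?L ! 0" "l \<noteq> []" "last l = False"
          unfolding tree_descents_def leaf_def by auto
        then obtain j where j: "j < Suc n" "l = ?L ! j" using len by (auto simp: in_set_conv_nth)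
        have j0: "j \<noteq> 0"
        proof
          assume "j = 0" then show False using j(2) l(2) by simp
        qed
        have jn: "j \<noteq> n"
        proof
          assume "j = n"
          then have "l = last ?L" using j len leaves_ne[of t] by (simp add: last_conv_nth)
          moreover obtain m where "last ?L = replicate m True" using last_leaves by blast
          ultimately show False using l(3,4) by (metis last_replicate replicate_empty)
        qed
        have j1: "1 \<le> j" "Suc j \<le> n" using j0 jn j by auto
        have "j \<in> perm_descents (sigma t \<phi>) n"
          using key[OF j1] j1 l(4) j unfolding perm_descents_def by auto
        then show "l \<in> (\<lambda>j. leaf t (j + 1)) ` perm_descents (sigma t \<phi>) n"
          using j lf by (intro image_eqI[of _ _ j]) auto
      qed
    qed
  qed
qed

end
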